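(* Let $L$ be a doubly even code of length $n$ and let $\phi\colon E_n\to SO_n$ be the homomorphism $\phi(i_1,\dots,i_n)=\operatorname{diag}\bigl((-1)^{i_1},\dots,(-1)^{i_n}\bigr)$. Then $\phi(L)$ has a finite centralizer in $SO_n$ if and only if a generator matrix of $L$ has distinct columns.
   Context: $k$ is an algebraically closed field of characteristic $0$ and $SO_n=SO_n(k)$. $E_n\subset(\mathbb{Z}/2\mathbb{Z})^n$ is the subgroup of vectors of even weight, where the weight of a vector is its number of coordinates equal to $1$. A doubly even code of length $n$ is a $\mathbb{Z}/2\mathbb{Z}$-subspace $L\subset(\mathbb{Z}/2\mathbb{Z})^n$ in which every element has weight divisible by $4$. A generator matrix of $L$ is a matrix over $\mathbb{Z}/2\mathbb{Z}$ with $n$ columns whose rows span $L$. *)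

theory Defs
  imports "HOL-Computational_Algebra.Polynomial" "Jordan_Normal_Form.Determinant"
begin

text \<open>A vector of (Z/2Z)^n is represented by its support, a subset of {0..<n};
  addition is symmetric difference and the weight is the cardinality.\<close>

definition F2vecs :: "nat \<Rightarrow> nat set set" where
  "F2vecs n = Pow {..<n}"

definition weight :: "nat set \<Rightarrow> nat" where
  "weight v = card v"

definition E :: "nat \<Rightarrow> nat set set" where
  "E n = {v \<in> F2vecs n. even (weight v)}"

definition F2_subspace :: "nat \<Rightarrow> nat set set \<Rightarrow> bool" where
  "F2_subspace n L \<longleftrightarrow> L \<subseteq> F2vecs n \<and> {} \<in> L \<and>
     (\<forall>a\<in>L. \<forall>b\<in>L. (a - b) \<union> (b - a) \<in> L)"

definition doubly_even_code :: "nat \<Rightarrow> nat set set \<Rightarrow> bool" where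
  "doubly_even_code n L \<longleftrightarrow> F2_subspace n L \<and> (\<forall>v\<in>L. 4 dvd weight v)"

text \<open>A matrix over Z/2Z with n columns, given as the list of its rows (supports).
  Its row space: all Z/2Z-linear combinations (sums of subsets of rows).\<close>

definition row_space :: "nat set list \<Rightarrow> nat set set" where
  "row_space G = {{j. odd (card {i\<in>I. j \<in> G ! i})} | I. I \<subseteq> {..<length G}}"

definition generator_matrix :: "nat \<Rightarrow> nat set set \<Rightarrow> nat set list \<Rightarrow> bool" where
  "generator_matrix n L G \<longleftrightarrow> set G \<subseteq> F2vecs n \<and> row_space G = L"

definition column :: "nat set list \<Rightarrow> nat \<Rightarrow> bool list" where
  "column G j = map (\<lambda>r. j \<in> r) G"

definition distinct_columns :: "nat \<Rightarrow> nat set list \<Rightarrow> bool" where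
  "distinct_columns n G \<longleftrightarrow> inj_on (column G) {..<n}"

definition SO :: "nat \<Rightarrow> 'k::field mat set" where
  "SO n = {A \<in> carrier_mat n n. transpose_mat A * A = 1\<^sub>m n \<and> det A = 1}"

definition phi :: "nat \<Rightarrow> nat set \<Rightarrow> 'k::field mat" where
  "phi n v = mat n n (\<lambda>(i,j). if i = j then (if i \<in> v then - 1 else 1) else 0)"

definition centralizer_in :: "'k::field mat set \<Rightarrow> 'k mat set \<Rightarrow> 'k mat set" where
  "centralizer_in G S = {A \<in> G. \<forall>B\<in>S. A * B = B * A}"

end

theory Submission
  imports Defs
begin

lemma mult_entry:
  assumes "A \<in> carrier_mat n n" "B \<in> carrier_mat n n" "r < n" "s < n"
  shows "(A * B) $$ (r,s) = (\<Sum>k\<in>{0..<n}. A $$ (r,k) * B $$ (k,s))"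
  using assms by (simp add: scalar_prod_def)

definition dsgn :: "nat set \<Rightarrow> nat \<Rightarrow> 'k::field" where
  "dsgn v s = (if s \<in> v then - 1 else 1)"

lemma phi_carrier[simp]: "phi n v \<in> carrier_mat n n"
  by (simp add: phi_def)

lemma mult_phi_right:
  assumes "A \<in> carrier_mat n n" "r < n" "s < n"
  shows "(A * phi n v) $$ (r,s) = A $$ (r,s) * dsgn v s"
proof -
  have "(A * phi n v) $$ (r,s) = (\<Sum>k\<in>{0..<n}. if k = s then A $$ (r,k) * dsgn v s else 0)"
    unfolding mult_entry[OF assms(1) phi_carrier assms(2,3)] mult_entry[OF phi_carrier assms(1) assms(2,3)]
    using assms by (intro sum.cong) (auto simp: phi_def dsgn_def)
  also have "\<dots> = A $$ (r,s) * dsgn v s"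
    using assms by (simp add: sum.delta')
  finally show ?thesis .
qed

lemma mult_phi_left:
  assumes "A \<in> carrier_mat n n" "r < n" "s < n"
  shows "(phi n v * A) $$ (r,s) = dsgn v r * A $$ (r,s)"
proof -
  have "(phi n v * A) $$ (r,s) = (\<Sum>k\<in>{0..<n}. if k = r then dsgn v r * A $$ (k,s) else 0)"
    unfolding mult_entry[OF assms(1) phi_carrier assms(2,3)] mult_entry[OF phi_carrier assms(1) assms(2,3)]
    using assms by (intro sum.cong) (auto simp: phi_def dsgn_def)
  also have "\<dots> = dsgn v r * A $$ (r,s)"
    using assms by (simp add: sum.delta')
  finally show ?thesis .
qed

definition plane :: "nat \<Rightarrow> nat \<Rightarrow> nat \<Rightarrow> 'a::field \<Rightarrow> 'a \<Rightarrow> 'a \<Rightarrow> 'a \<Rightarrow> 'a mat" where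
  "plane n i j a b c d = mat n n (\<lambda>(r,s). if r = i \<and> s = i then a else if r = i \<and> s = j then b
     else if r = j \<and> s = i then c else if r = j \<and> s = j then d else if r = s then 1 else 0)"

lemma plane_carrier[simp]: "plane n i j a b c d \<in> carrier_mat n n"
  by (simp add: plane_def)

lemma plane_idx:
  assumes "r < n" "s < n"
  shows "plane n i j a b c d $$ (r,s) = (if r = i \<and> s = i then a else if r = i \<and> s = j then b
     else if r = j \<and> s = i then c else if r = j \<and> s = j then d else if r = s then 1 else 0)"
  using assms by (simp add: plane_def)

lemma plane_off:
  assumes "k \<notin> {i,j}" "r < n" "k < n"
  shows "plane n i j a b c d $$ (r,k) = (if r = k then 1 else 0)"
  using assms by (auto simp: plane_def)

lemma plane_mult:
  assumes ij: "i < n" "j < n" "i \<noteq> j"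
  shows "plane n i j a b c d * plane n i j a' b' c' d' =
    plane n i j (a*a' + b*c') (a*b' + b*d') (c*a' + d*c') (c*b' + d*d')"
proof (rule eq_matI)
  fix r s assume rs: "r < dim_row (plane n i j (a*a' + b*c') (a*b' + b*d') (c*a' + d*c') (c*b' + d*d'))"
     "s < dim_col (plane n i j (a*a' + b*c') (a*b' + b*d') (c*a' + d*c') (c*b' + d*d'))"
  hence r: "r < n" and s: "s < n" by (auto simp: plane_def)
  let ?P = "plane n i j a b c d" and ?Q = "plane n i j a' b' c' d'"
  let ?f = "\<lambda>k. ?P $$ (r,k) * ?Q $$ (k,s)"
  have "(?P * ?Q) $$ (r,s) = sum ?f {0..<n}" by (rule mult_entry) (auto simp: r s)
  also have "\<dots> = ?f i + ?f j + sum ?f ({0..<n} - {i,j})"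
  proof -
    have "sum ?f {0..<n} = sum ?f ({0..<n} - {i,j}) + sum ?f {i,j}"
      by (rule sum.subset_diff) (use ij in auto)
    thus ?thesis using ij by simp
  qed
  also have "sum ?f ({0..<n} - {i,j}) = (\<Sum>k\<in>{0..<n} - {i,j}. if k = r then ?Q $$ (r,s) else 0)"
  proof (rule sum.cong[OF refl])
    fix k assume "k \<in> {0..<n} - {i,j}"
    hence k: "k < n" "k \<notin> {i,j}" by auto
    show "?f k = (if k = r then ?Q $$ (r,s) else 0)"
      unfolding plane_off[OF k(2) r k(1)] by auto
  qed
  also have "\<dots> = (if r \<in> {i,j} then 0 else ?Q $$ (r,s))"
    using r by (simp add: sum.delta')
  finally have e: "(?P * ?Q) $$ (r,s) = ?f i + ?f j + (if r \<in> {i,j} then 0 else ?Q $$ (r,s))" .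
  show "(?P * ?Q) $$ (r,s) = plane n i j (a*a' + b*c') (a*b' + b*d') (c*a' + d*c') (c*b' + d*d') $$ (r,s)"
    unfolding e using ij r s
    by (cases "r = i"; cases "r = j"; cases "s = i"; cases "s = j") (simp_all add: plane_idx algebra_simps)
next
  show "dim_row (plane n i j a b c d * plane n i j a' b' c' d') = dim_row (plane n i j (a*a' + b*c') (a*b' + b*d') (c*a' + d*c') (c*b' + d*d'))"
    by (simp add: plane_def)
  show "dim_col (plane n i j a b c d * plane n i j a' b' c' d') = dim_col (plane n i j (a*a' + b*c') (a*b' + b*d') (c*a' + d*c') (c*b' + d*d'))"
    by (simp add: plane_def)
qed

lemma plane_transpose: "transpose_mat (plane n i j a b c d) = plane n i j a c b d"
  by (rule eq_matI) (auto simp: plane_def)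

lemma plane_one:
  assumes "i \<noteq> j" shows "plane n i j 1 0 0 1 = 1\<^sub>m n"
proof (rule eq_matI)
  fix r s assume "r < dim_row (1\<^sub>m n :: 'a mat)" "s < dim_col (1\<^sub>m n :: 'a mat)"
  hence rs: "r < n" "s < n" by auto
  show "plane n i j 1 0 0 1 $$ (r, s) = (1\<^sub>m n :: 'a mat) $$ (r, s)"
    unfolding plane_idx[OF rs] index_one_mat(1)[OF rs] using assms
    by (cases "r = i"; cases "r = j"; cases "s = i"; cases "s = j") simp_all
qed (simp_all add: plane_def)

lemma plane_phi:
  assumes "i < n" "j < n" "(i \<in> v) = (j \<in> v)"
  shows "plane n i j a b c d * phi n v = phi n v * plane n i j a b c d"
proof (rule eq_matI)
  fix r s assume "r < dim_row (phi n v * plane n i j a b c d)" "s < dim_col (phi n v * plane n i j a b c d)"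
  hence rs: "r < n" "s < n" by (auto simp: phi_def plane_def)
  show "(plane n i j a b c d * phi n v) $$ (r, s) = (phi n v * plane n i j a b c d) $$ (r, s)"
  proof -
    have "dsgn v r = (dsgn v s :: 'a) \<or> plane n i j a b c d $$ (r,s) = 0"
    proof (cases "r \<in> {i,j} \<and> s \<in> {i,j}")
      case True thus ?thesis using assms by (auto simp: dsgn_def)
    next
      case False
      show ?thesis
      proof (cases "r = s")
        case False
        hence "plane n i j a b c d $$ (r,s) = 0"
          using \<open>\<not> (r \<in> {i,j} \<and> s \<in> {i,j})\<close> rs unfolding plane_idx[OF rs] by auto
        thus ?thesis by simp
      qed simp
    qed
    thus ?thesis
      unfolding mult_phi_left[OF plane_carrier rs] mult_phi_right[OF plane_carrier rs]
      by (auto simp: mult.commute)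
  qed
qed (auto simp: phi_def plane_def)


definition ca :: "nat \<Rightarrow> 'k::field_char_0" where
  "ca m = (1 - of_nat m * of_nat m) / (1 + of_nat m * of_nat m)"
definition cb :: "nat \<Rightarrow> 'k::field_char_0" where
  "cb m = 2 * of_nat m / (1 + of_nat m * of_nat m)"

lemma alg1: "(1 - x*x)*(1 - x*x) + (2*x)*(2*x) = (1 + x*x)*(1 + (x::'a::comm_ring_1)*x)" by (simp add: algebra_simps)
lemma alg2: "(1 - t*t)*(1 + u*u) = (1 - u*u)*(1 + t*t) \<Longrightarrow> 2 * (t*t) = 2 * ((u::'a::comm_ring_1)*u)" by (simp add: algebra_simps)
lemma alg3: "(1 - t*t)*(1 + u*u) = - ((1 - u*u)*(1 + t*t)) \<Longrightarrow> 2 * (t*t*(u*u)) = 2 * (1::'a::comm_ring_1)" by (simp add: algebra_simps)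

lemma denom_nz: "(1 + of_nat m * of_nat m :: 'k::field_char_0) \<noteq> 0"
proof -
  have "(1 + of_nat m * of_nat m :: 'k) = of_nat (1 + m * m)" by simp
  also have "\<dots> \<noteq> 0" by (simp only: of_nat_eq_0_iff) 
  finally show ?thesis .
qed

lemma cab_one: "ca m * ca m + cb m * cb m = (1 :: 'k::field_char_0)"
proof -
  let ?t = "of_nat m :: 'k"
  have "ca m * ca m + cb m * cb m = ((1 - ?t*?t)*(1 - ?t*?t) + (2*?t)*(2*?t)) / ((1 + ?t*?t)*(1 + ?t*?t))"
    by (simp add: ca_def cb_def add_divide_distrib)
  also have "(1 - ?t*?t)*(1 - ?t*?t) + (2*?t)*(2*?t) = (1 + ?t*?t)*(1 + ?t*?t)" by (rule alg1)
  also have "\<dots> / ((1 + ?t*?t)*(1 + ?t*?t)) = 1" using denom_nz[of m, where 'k='k] by simp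
  finally show ?thesis .
qed

lemma ca_inj:
  assumes "m \<ge> 2" "k \<ge> 2" "ca m * ca m = (ca k * ca k :: 'k::field_char_0)"
  shows "m = k"
proof -
  let ?t = "of_nat m :: 'k" and ?u = "of_nat k :: 'k"
  have "(ca m - ca k) * (ca m + ca k) = ca m * ca m - (ca k * ca k :: 'k)" by (simp add: algebra_simps)
  hence "(ca m - ca k) * (ca m + ca k) = (0::'k)" using assms(3) by simp
  hence "ca m = (ca k :: 'k) \<or> ca m = - (ca k :: 'k)" by (auto simp: eq_neg_iff_add_eq_0)
  thus ?thesis
  proof
    assume "ca m = (ca k :: 'k)"
    hence "(1 - ?t * ?t) * (1 + ?u * ?u) = (1 - ?u * ?u) * (1 + ?t * ?t)"
      using denom_nz[of m, where 'k='k] denom_nz[of k, where 'k='k] unfolding ca_def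
      by (simp add: field_simps)
    hence "2 * (?t * ?t) = 2 * (?u * ?u)" by (rule alg2)
    hence "?t * ?t = ?u * ?u" by simp
    hence "of_nat (m * m) = (of_nat (k * k) :: 'k)" by simp
    hence "m * m = k * k" by (simp only: of_nat_eq_iff)
    thus "m = k" by (metis le_antisym mult_le_mono nat_le_linear not_le mult_strict_mono' zero_le)
  next
    assume "ca m = - (ca k :: 'k)"
    hence "(1 - ?t * ?t) * (1 + ?u * ?u) = - ((1 - ?u * ?u) * (1 + ?t * ?t))"
      using denom_nz[of m, where 'k='k] denom_nz[of k, where 'k='k] unfolding ca_def
      by (simp add: field_simps)
    hence "2 * (?t * ?t * (?u * ?u)) = 2 * 1" by (rule alg3)
    hence "?t * ?t * (?u * ?u) = 1" by simp
    hence "of_nat (m * m * (k * k)) = (of_nat 1 :: 'k)" by simp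
    hence "m * m * (k * k) = 1" by (simp only: of_nat_eq_iff)
    thus "m = k" using assms by simp
  qed
qed


lemma row_in_space:
  assumes "k < length G" shows "G ! k \<in> row_space G"
proof -
  have "{j. odd (card {i\<in>{k}. j \<in> G ! i})} = G ! k"
  proof -
    have e: "\<And>j. {i. i = k \<and> j \<in> G ! i} = (if j \<in> G ! k then {k} else {})" by auto
    show ?thesis by (simp add: e set_eq_iff)
  qed
  moreover have "{k} \<subseteq> {..<length G}" using assms by auto
  ultimately show ?thesis unfolding row_space_def by blast
qed

lemma same_col:
  assumes "v \<in> row_space G" "column G i = column G j"
  shows "(i \<in> v) = (j \<in> v)"
proof -
  from assms(1) obtain I where I: "I \<subseteq> {..<length G}" "v = {x. odd (card {k\<in>I. x \<in> G ! k})}"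
    unfolding row_space_def by blast
  have "\<forall>k < length G. (i \<in> G ! k) = (j \<in> G ! k)"
    using assms(2) unfolding column_def by (metis nth_map)
  hence "{k\<in>I. i \<in> G ! k} = {k\<in>I. j \<in> G ! k}" using I(1) by auto
  thus ?thesis using I(2) by simp
qed

lemma finite_bounded_mats:
  assumes "finite F"
  shows "finite {A \<in> carrier_mat n n. \<forall>r<n. \<forall>s<n. A $$ (r,s) \<in> F}"
proof -
  let ?S = "{A \<in> carrier_mat n n. \<forall>r<n. \<forall>s<n. A $$ (r,s) \<in> F}"
  have "?S \<subseteq> (\<lambda>f. mat n n f) ` (({..<n} \<times> {..<n}) \<rightarrow>\<^sub>E F)"
  proof
    fix A assume A: "A \<in> ?S"
    let ?f = "restrict (\<lambda>p. A $$ p) ({..<n} \<times> {..<n})"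
    have "A = mat n n ?f" using A by (intro eq_matI) auto
    moreover have "?f \<in> ({..<n} \<times> {..<n}) \<rightarrow>\<^sub>E F" using A by auto
    ultimately show "A \<in> (\<lambda>f. mat n n f) ` (({..<n} \<times> {..<n}) \<rightarrow>\<^sub>E F)" by blast
  qed
  moreover have "finite ((\<lambda>f. mat n n f) ` (({..<n} \<times> {..<n}) \<rightarrow>\<^sub>E F))"
    using assms by (intro finite_imageI finite_PiE) auto
  ultimately show ?thesis by (rule finite_subset)
qed

lemma dir1:
  assumes dc: "distinct_columns n G" and gm: "generator_matrix n L G"
  shows "finite (centralizer_in (SO n :: 'k::field_char_0 mat set) (phi n ` L))"
proof -
  have "centralizer_in (SO n :: 'k mat set) (phi n ` L) \<subseteq>
     {A \<in> carrier_mat n n. \<forall>r<n. \<forall>s<n. A $$ (r,s) \<in> {0,1,-1}}"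
  proof
    fix A :: "'k mat" assume A: "A \<in> centralizer_in (SO n) (phi n ` L)"
    hence Ac: "A \<in> carrier_mat n n" and orth: "transpose_mat A * A = 1\<^sub>m n"
      and comm: "\<And>v. v \<in> L \<Longrightarrow> A * phi n v = phi n v * A"
      unfolding centralizer_in_def SO_def by auto
    have off: "A $$ (r,s) = 0" if rs: "r < n" "s < n" "r \<noteq> s" for r s
    proof (rule ccontr)
      assume nz: "A $$ (r,s) \<noteq> 0"
      have "\<forall>k < length G. (r \<in> G ! k) = (s \<in> G ! k)"
      proof (intro allI impI)
        fix k assume k: "k < length G"
        hence "G ! k \<in> L" using gm row_in_space unfolding generator_matrix_def by blast
        hence "(A * phi n (G!k)) $$ (r,s) = (phi n (G!k) * A) $$ (r,s)" using comm by simp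
        hence "A $$ (r,s) * dsgn (G!k) s = dsgn (G!k) r * A $$ (r,s)"
          using mult_phi_left[OF Ac rs(1,2)] mult_phi_right[OF Ac rs(1,2)] by simp
        hence "dsgn (G!k) s = (dsgn (G!k) r :: 'k)" using nz by (simp add: mult.commute)
        thus "(r \<in> G ! k) = (s \<in> G ! k)" unfolding dsgn_def by (auto split: if_splits)
      qed
      hence "column G r = column G s" unfolding column_def
        unfolding map_eq_conv by (metis in_set_conv_nth)
      thus False using dc rs unfolding distinct_columns_def inj_on_def by auto
    qed
    have diag: "A $$ (r,r) \<in> {1,-1}" if r: "r < n" for r
    proof -
      have "1 = (transpose_mat A * A) $$ (r,r)" using orth r by simp
      also have "\<dots> = (\<Sum>k\<in>{0..<n}. transpose_mat A $$ (r,k) * A $$ (k,r))"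
        by (rule mult_entry) (use Ac r in auto)
      also have "\<dots> = (\<Sum>k\<in>{0..<n}. if k = r then A $$ (r,r) * A $$ (r,r) else 0)"
        by (rule sum.cong[OF refl]) (use Ac r off in auto)
      also have "\<dots> = A $$ (r,r) * A $$ (r,r)" using r by (simp add: sum.delta')
      finally have "A $$ (r,r) * A $$ (r,r) = 1" by simp
      thus ?thesis using square_eq_1_iff by auto
    qed
    show "A \<in> {A \<in> carrier_mat n n. \<forall>r<n. \<forall>s<n. A $$ (r,s) \<in> {0,1,-1}}"
      using Ac off diag by auto
  qed
  thus ?thesis by (rule finite_subset) (rule finite_bounded_mats, simp)
qed


lemma alg4: "x*x + y*y = (1::'a::comm_ring_1) \<Longrightarrow> (x*x - y*y)*(x*x - y*y) + (2*x*y)*(2*x*y) = 1"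
proof -
  assume h: "x*x + y*y = 1"
  have "(x*x - y*y)*(x*x - y*y) + (2*x*y)*(2*x*y) = (x*x + y*y)*(x*x + y*y)" by (simp add: algebra_simps)
  thus ?thesis using h by simp
qed

lemma plane_orth:
  assumes ij: "i < n" "j < n" "i \<noteq> j" and h: "x*x + y*y = (1::'a::field)"
  shows "transpose_mat (plane n i j x y (-y) x) * plane n i j x y (-y) x = 1\<^sub>m n"
proof -
  have "transpose_mat (plane n i j x y (-y) x) * plane n i j x y (-y) x
    = plane n i j (x*x + (-y)*(-y)) (x*y + (-y)*x) (y*x + x*(-y)) (y*y + x*x)"
    unfolding plane_transpose plane_mult[OF ij] by simp
  also have "\<dots> = plane n i j 1 0 0 1"
    using h by (simp add: algebra_simps)
  also have "\<dots> = 1\<^sub>m n" using ij by (simp add: plane_one)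
  finally show ?thesis .
qed

lemma dir2:
  assumes gm: "generator_matrix n L G" and nd: "\<not> distinct_columns n G"
  shows "infinite (centralizer_in (SO n :: 'k::field_char_0 mat set) (phi n ` L))"
proof
  assume fin: "finite (centralizer_in (SO n :: 'k mat set) (phi n ` L))"
  obtain i j where ij: "i < n" "j < n" "i \<noteq> j" and col: "column G i = column G j"
    using nd unfolding distinct_columns_def inj_on_def by auto
  have mem: "(i \<in> v) = (j \<in> v)" if "v \<in> L" for v
    using same_col[OF _ col] that gm unfolding generator_matrix_def by auto
  define Q :: "nat \<Rightarrow> 'k mat" where "Q m = plane n i j (ca m) (cb m) (- cb m) (ca m)" for m
  define al :: "nat \<Rightarrow> 'k" where "al m = ca m * ca m - cb m * cb m" for m
  define be :: "nat \<Rightarrow> 'k" where "be m = 2 * ca m * cb m" for m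
  define R :: "nat \<Rightarrow> 'k mat" where "R m = plane n i j (al m) (be m) (- be m) (al m)" for m
  have RQ: "R m = Q m * Q m" for m
    unfolding R_def Q_def plane_mult[OF ij] al_def be_def by (simp add: algebra_simps)
  have Qorth: "transpose_mat (Q m) * Q m = 1\<^sub>m n" for m
    unfolding Q_def by (rule plane_orth[OF ij cab_one])
  have detQ: "det (Q m) * det (Q m) = 1" for m
  proof -
    have "det (transpose_mat (Q m) * Q m) = 1" using Qorth by simp
    moreover have "det (transpose_mat (Q m) * Q m) = det (Q m) * det (Q m)"
      using det_mult[of "transpose_mat (Q m)" n "Q m"] det_transpose[of "Q m" n]
      by (simp add: Q_def)
    ultimately show ?thesis by simp
  qed
  have RC: "R m \<in> centralizer_in (SO n) (phi n ` L)" for m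
  proof -
    have "R m \<in> carrier_mat n n" by (simp add: R_def)
    moreover have "transpose_mat (R m) * R m = 1\<^sub>m n"
      unfolding R_def by (rule plane_orth[OF ij]) (unfold al_def be_def, rule alg4[OF cab_one])
    moreover have "det (R m) = 1"
      unfolding RQ using det_mult[of "Q m" n "Q m"] detQ by (simp add: Q_def)
    moreover have "R m * phi n v = phi n v * R m" if "v \<in> L" for v
      unfolding R_def by (rule plane_phi[OF ij(1,2) mem[OF that]])
    ultimately show ?thesis unfolding centralizer_in_def SO_def by auto
  qed
  have "inj (\<lambda>m. R (m + 2))"
  proof (rule injI)
    fix m k assume "R (m + 2) = R (k + 2)"
    hence "R (m + 2) $$ (i,i) = R (k + 2) $$ (i,i)" by simp
    hence "al (m + 2) = al (k + 2)" unfolding R_def using ij by (simp add: plane_idx)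
    moreover have "al p = 2 * (ca p * ca p) - 1" for p
      using cab_one[of p, where 'k='k] unfolding al_def by (simp add: algebra_simps)
    ultimately have "ca (m+2) * ca (m+2) = (ca (k+2) * ca (k+2) :: 'k)" by simp
    hence "m + 2 = k + 2" by (rule ca_inj[rotated 2]) auto
    thus "m = k" by simp
  qed
  hence "infinite (range (\<lambda>m. R (m + 2)))"
    using finite_imageD infinite_UNIV_nat by blast
  moreover have "range (\<lambda>m. R (m + 2)) \<subseteq> centralizer_in (SO n) (phi n ` L)" using RC by auto
  ultimately show False using fin finite_subset by blast
qed

theorem lemma8p15:
  fixes n :: nat and L :: "nat set set" and G :: "nat set list"
  assumes "doubly_even_code n L"
    and "generator_matrix n L G"
  shows "finite (centralizer_in (SO n :: 'k::{alg_closed_field, field_char_0} mat set)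
                   (phi n ` L))
         \<longleftrightarrow> distinct_columns n G"
  using dir1[OF _ assms(2)] dir2[OF assms(2)] by blast

end
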